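(* Let $M\equiv\lambda\,\mathit{argClass}.\,\mathbf{Y}(\lambda\,\mathit{myClass}\,\lambda\,\mathit{state}.\,(\mathit{argClass}\;\mathit{state})\oplus R)$ be a mixin and let $\sigma\in\mathbb{T}$, $\rho_1,\rho_2\in\mathbb{T}_R$ be types not containing $+$ (and whose translations are defined) with $\mathit{lbl}(\rho_2)=\mathit{lbl}(R)$, such that for all $\rho\in\mathbb{T}_R$, $\vdash M:(\sigma\to\rho\cap\rho_1)\to(\sigma\to\rho+\rho_2)$. Define $\tau_M\equiv(([\![\sigma]\!]\to[\![\rho_1]\!])\to([\![\sigma]\!]\to[\![\rho_2]\!]))\cap\bigcap_{l\in\mathcal{L}\setminus\mathit{lbl}(R)}(([\![\sigma]\!]\to\langle\!\langle l(\alpha_l)\rangle\!\rangle)\to([\![\sigma]\!]\to\langle\!\langle l(\alpha_l)\rangle\!\rangle))$ with distinct type variables $\alpha_l$. Then for any substitution $S$ and any type $\tau\in\mathbb{T}$ such that $[\![\tau]\!]=S(\tau_M)$, we have $\vdash M:\tau$.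
   Context: \textbf{Terms.} $\Lambda_R\ni M,N ::= x\mid\lambda x.M\mid MN\mid M.l\mid R\mid M\oplus R$, records $R ::= \langle l_i=M_i\mid i\in I\rangle$, $\mathit{lbl}(\langle l_i=M_i\mid i\in I\rangle)=\{l_i\mid i\in I\}$. $\mathbf{Y}=\lambda f.(\lambda x.f(xx))(\lambda x.f(xx))$. A mixin is a closed term of the displayed form. \textbf{Types.} $\mathbb{T}\ni\sigma ::= a\mid\omega\mid\sigma_1\to\sigma_2\mid\sigma_1\cap\sigma_2\mid\rho$, $\mathbb{T}_R\ni\rho ::= \langle\rangle\mid\langle l:\sigma\rangle\mid\rho_1+\rho_2\mid\rho_1\cap\rho_2$. Subtyping $\le$: least preorder with $\sigma\le\omega$; $\omega\le\omega\to\omega$; $\sigma\cap\tau\le\sigma,\tau$; $\sigma\le\tau_1,\sigma\le\tau_2\Rightarrow\sigma\le\tau_1\cap\tau_2$; $(\sigma\to\tau_1)\cap(\sigma\to\tau_2)\le\sigma\to\tau_1\cap\tau_2$; $\sigma_2\le\sigma_1,\tau_1\le\tau_2\Rightarrow\sigma_1\to\tau_1\le\sigma_2\to\tau_2$; $\langle l:\sigma\rangle\le\langle\rangle$; $\langle l:\sigma\rangle\cap\langle l:\tau\rangle\le\langle l:\sigma\cap\tau\rangle$; $\sigma\le\tau\Rightarrow\langle l:\sigma\rangle\le\langle l:\tau\rangle$; $\rho+\langle\rangle=\langle\rangle+\rho=\rho$; $(\rho_1+\rho_2)+\rho_3=\rho_1+(\rho_2+\rho_3)$; $(\rho_1\cap\rho_2)+\rho_3=(\rho_1+\rho_3)\cap(\rho_2+\rho_3)$;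 $\langle l:\sigma\rangle+(\langle l:\tau\rangle\cap\rho)=\langle l:\tau\rangle\cap\rho$; $\langle l:\sigma\rangle+(\langle l':\tau\rangle\cap\rho)=\langle l':\tau\rangle\cap(\langle l:\sigma\rangle+\rho)$ if $l\neq l'$; $\rho_1\le\rho_2\Rightarrow\rho_1+\rho\le\rho_2+\rho$; $\rho_1=\rho_2\Rightarrow\rho+\rho_1=\rho+\rho_2$ ($=$ is $\le$ in both directions). $\mathit{lbl}(\langle\rangle)=\emptyset$, $\mathit{lbl}(\langle l:\sigma\rangle)=\{l\}$, $\mathit{lbl}(\rho_1\cap\rho_2)=\mathit{lbl}(\rho_1+\rho_2)=\mathit{lbl}(\rho_1)\cup\mathit{lbl}(\rho_2)$. \textbf{Type assignment} $\Gamma\vdash M:\sigma$ ($\vdash$ with empty basis): variable axiom; $\to$-intro/elim; $\cap$-intro; $\Gamma\vdash M:\omega$; subsumption along $\le$; $\Gamma\vdash\langle l_i=M_i\mid i\in I\rangle:\langle\rangle$; from $\Gamma\vdash M_k:\sigma$, $k\in I$ infer $\Gamma\vdash\langle l_i=M_i\mid i\in I\rangle:\langle l_k:\sigma\rangle$; from $\Gamma\vdash M:\langle l:\sigma\rangle$ infer $\Gamma\vdash M.l:\sigma$; from $\Gamma\vdash M:\rho_1$, $\Gamma\vdash R:\rho_2$, $\mathit{lbl}(R)=\mathit{lbl}(\rho_2)$ infer $\Gamma\vdash M\oplus R:\rho_1+\rho_2$. \textbf{Target types and translation.} $\mathbb{T}_C\ni\tau ::= a\mid\alpha\mid\omega\mid\tau_1\to\tau_2\mid\tau_1\cap\tau_2\mid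 c(\tau)$ ($\alpha$ type variables, $c$ unary constructors), with subtyping given by the arrow/intersection axioms above plus $\tau_1\le\tau_2\Rightarrow c(\tau_1)\le c(\tau_2)$ and $c(\tau_1)\cap c(\tau_2)\le c(\tau_1\cap\tau_2)$; $=$ denotes equivalence. Substitutions map type variables to $\mathbb{T}_C$-types. $\mathcal{L}$ is a fixed finite set of labels; constructors $\langle\!\langle\cdot\rangle\!\rangle$ and $l(\cdot)$ for $l\in\mathcal{L}$. The partial translation $[\![\cdot]\!]:\mathbb{T}\to\mathbb{T}_C$: $[\![\omega]\!]=\omega$, $[\![a]\!]=a$, $[\![\sigma\to\tau]\!]=[\![\sigma]\!]\to[\![\tau]\!]$, $[\![\sigma\cap\tau]\!]=[\![\sigma]\!]\cap[\![\tau]\!]$, $[\![\langle l:\tau\rangle]\!]=\langle\!\langle l([\![\tau]\!])\rangle\!\rangle$, $[\![\langle\rangle]\!]=\langle\!\langle\omega\rangle\!\rangle$; undefined on types containing $+$. *)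

theory Defs
  imports Main
begin

type_synonym var = nat
type_synonym label = nat
type_synonym atom = nat
type_synonym tvar = nat

text \<open>Records are lists of (label, term) pairs; a record expression is \<open>Rec R\<close>,
  and \<open>Merge M R\<close> is \<open>M \<oplus> R\<close> (the right argument is syntactically a record).\<close>

datatype trm =
    Var var
  | Lam var trm
  | App trm trm
  | Sel trm label
  | Rec "(label \<times> trm) list"
  | Merge trm "(label \<times> trm) list"

definition lblR :: "(label \<times> trm) list \<Rightarrow> label set" where
  "lblR R = set (map fst R)"

fun fv :: "trm \<Rightarrow> var set" where
  "fv (Var x) = {x}"
| "fv (Lam x M) = fv M - {x}"
| "fv (App M N) = fv M \<union> fv N"
| "fv (Sel M l) = fv M"
| "fv (Rec R) = (\<Union>p\<in>set R. fv (snd p))"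
| "fv (Merge M R) = fv M \<union> (\<Union>p\<in>set R. fv (snd p))"

fun wf_trm :: "trm \<Rightarrow> bool" where
  "wf_trm (Var x) = True"
| "wf_trm (Lam x M) = wf_trm M"
| "wf_trm (App M N) = (wf_trm M \<and> wf_trm N)"
| "wf_trm (Sel M l) = wf_trm M"
| "wf_trm (Rec R) = (distinct (map fst R) \<and> (\<forall>p\<in>set R. wf_trm (snd p)))"
| "wf_trm (Merge M R) = (wf_trm M \<and> distinct (map fst R) \<and> (\<forall>p\<in>set R. wf_trm (snd p)))"

text \<open>The fixed point combinator Y = \<lambda>f.(\<lambda>x.f(xx))(\<lambda>x.f(xx)) (closed, so the
  choice of bound names 0, 1 is immaterial).\<close>
definition Ycomb :: trm where
  "Ycomb = Lam 0 (App (Lam 1 (App (Var 0) (App (Var 1) (Var 1))))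
                      (Lam 1 (App (Var 0) (App (Var 1) (Var 1)))))"

definition mixin :: "var \<Rightarrow> var \<Rightarrow> var \<Rightarrow> (label \<times> trm) list \<Rightarrow> trm" where
  "mixin a m s R = Lam a (App Ycomb (Lam m (Lam s (Merge (App (Var a) (Var s)) R))))"

text \<open>One syntax for both \<open>\<sigma>\<close>-types and \<open>\<rho>\<close>-types (intersection is shared);
  \<open>REmp\<close> = <>, \<open>Fld l \<sigma>\<close> = <l:sigma>, \<open>Plus\<close> = +.\<close>
datatype ty =
    Atom atom
  | Omega
  | Arr ty ty
  | Inter ty ty
  | REmp
  | Fld label ty
  | Plus ty ty

fun rshape :: "ty \<Rightarrow> bool" where
  "rshape REmp = True"
| "rshape (Fld l s) = True"
| "rshape (Plus r1 r2) = (rshape r1 \<and> rshape r2)"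
| "rshape (Inter r1 r2) = (rshape r1 \<and> rshape r2)"
| "rshape _ = False"

fun isT :: "ty \<Rightarrow> bool" where
  "isT (Atom a) = True"
| "isT Omega = True"
| "isT (Arr s t) = (isT s \<and> isT t)"
| "isT (Inter s t) = (isT s \<and> isT t)"
| "isT REmp = True"
| "isT (Fld l s) = isT s"
| "isT (Plus r1 r2) = (rshape r1 \<and> rshape r2 \<and> isT r1 \<and> isT r2)"

definition isR :: "ty \<Rightarrow> bool" where
  "isR r \<longleftrightarrow> rshape r \<and> isT r"

fun lblT :: "ty \<Rightarrow> label set" where
  "lblT REmp = {}"
| "lblT (Fld l s) = {l}"
| "lblT (Inter r1 r2) = lblT r1 \<union> lblT r2"
| "lblT (Plus r1 r2) = lblT r1 \<union> lblT r2"
| "lblT _ = {}"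

fun plus_free :: "ty \<Rightarrow> bool" where
  "plus_free (Arr s t) = (plus_free s \<and> plus_free t)"
| "plus_free (Inter s t) = (plus_free s \<and> plus_free t)"
| "plus_free (Fld l s) = plus_free s"
| "plus_free (Plus r1 r2) = False"
| "plus_free _ = True"

inductive sub :: "ty \<Rightarrow> ty \<Rightarrow> bool" where
  refl: "isT s \<Longrightarrow> sub s s"
| trans: "sub s t \<Longrightarrow> sub t u \<Longrightarrow> sub s u"
| omega: "isT s \<Longrightarrow> sub s Omega"
| omega_arr: "sub Omega (Arr Omega Omega)"
| inter_l: "isT s \<Longrightarrow> isT t \<Longrightarrow> sub (Inter s t) s"
| inter_r: "isT s \<Longrightarrow> isT t \<Longrightarrow> sub (Inter s t) t"
| inter_glb: "sub s t1 \<Longrightarrow> sub s t2 \<Longrightarrow> sub s (Inter t1 t2)"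
| arr_inter: "isT s \<Longrightarrow> isT t1 \<Longrightarrow> isT t2 \<Longrightarrow>
     sub (Inter (Arr s t1) (Arr s t2)) (Arr s (Inter t1 t2))"
| arr: "sub s2 s1 \<Longrightarrow> sub t1 t2 \<Longrightarrow> sub (Arr s1 t1) (Arr s2 t2)"
| fld_emp: "isT s \<Longrightarrow> sub (Fld l s) REmp"
| fld_inter: "isT s \<Longrightarrow> isT t \<Longrightarrow> sub (Inter (Fld l s) (Fld l t)) (Fld l (Inter s t))"
| fld_mono: "sub s t \<Longrightarrow> sub (Fld l s) (Fld l t)"
| plus_emp_r1: "isR r \<Longrightarrow> sub (Plus r REmp) r"
| plus_emp_r2: "isR r \<Longrightarrow> sub r (Plus r REmp)"
| plus_emp_l1: "isR r \<Longrightarrow> sub (Plus REmp r) r"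
| plus_emp_l2: "isR r \<Longrightarrow> sub r (Plus REmp r)"
| plus_assoc1: "isR r1 \<Longrightarrow> isR r2 \<Longrightarrow> isR r3 \<Longrightarrow>
     sub (Plus (Plus r1 r2) r3) (Plus r1 (Plus r2 r3))"
| plus_assoc2: "isR r1 \<Longrightarrow> isR r2 \<Longrightarrow> isR r3 \<Longrightarrow>
     sub (Plus r1 (Plus r2 r3)) (Plus (Plus r1 r2) r3)"
| plus_distr1: "isR r1 \<Longrightarrow> isR r2 \<Longrightarrow> isR r3 \<Longrightarrow>
     sub (Plus (Inter r1 r2) r3) (Inter (Plus r1 r3) (Plus r2 r3))"
| plus_distr2: "isR r1 \<Longrightarrow> isR r2 \<Longrightarrow> isR r3 \<Longrightarrow>
     sub (Inter (Plus r1 r3) (Plus r2 r3)) (Plus (Inter r1 r2) r3)"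
| plus_ovr1: "isT s \<Longrightarrow> isT t \<Longrightarrow> isR r \<Longrightarrow>
     sub (Plus (Fld l s) (Inter (Fld l t) r)) (Inter (Fld l t) r)"
| plus_ovr2: "isT s \<Longrightarrow> isT t \<Longrightarrow> isR r \<Longrightarrow>
     sub (Inter (Fld l t) r) (Plus (Fld l s) (Inter (Fld l t) r))"
| plus_ext1: "l \<noteq> l' \<Longrightarrow> isT s \<Longrightarrow> isT t \<Longrightarrow> isR r \<Longrightarrow>
     sub (Plus (Fld l s) (Inter (Fld l' t) r)) (Inter (Fld l' t) (Plus (Fld l s) r))"
| plus_ext2: "l \<noteq> l' \<Longrightarrow> isT s \<Longrightarrow> isT t \<Longrightarrow> isR r \<Longrightarrow>
     sub (Inter (Fld l' t) (Plus (Fld l s) r)) (Plus (Fld l s) (Inter (Fld l' t) r))"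
| plus_mono: "sub r1 r2 \<Longrightarrow> isR r1 \<Longrightarrow> isR r2 \<Longrightarrow> isR r \<Longrightarrow>
     sub (Plus r1 r) (Plus r2 r)"
| plus_cong: "sub r1 r2 \<Longrightarrow> sub r2 r1 \<Longrightarrow> isR r1 \<Longrightarrow> isR r2 \<Longrightarrow> isR r \<Longrightarrow>
     sub (Plus r r1) (Plus r r2)"

type_synonym basis = "var \<Rightarrow> ty option"

inductive typing :: "basis \<Rightarrow> trm \<Rightarrow> ty \<Rightarrow> bool" where
  t_var: "\<Gamma> x = Some s \<Longrightarrow> typing \<Gamma> (Var x) s"
| t_abs: "isT s \<Longrightarrow> typing (\<Gamma>(x \<mapsto> s)) M t \<Longrightarrow> typing \<Gamma> (Lam x M) (Arr s t)"
| t_app: "typing \<Gamma> M (Arr s t) \<Longrightarrow> typing \<Gamma> N s \<Longrightarrow> typing \<Gamma> (App M N) t"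
| t_inter: "typing \<Gamma> M s \<Longrightarrow> typing \<Gamma> M t \<Longrightarrow> typing \<Gamma> M (Inter s t)"
| t_omega: "typing \<Gamma> M Omega"
| t_sub: "typing \<Gamma> M s \<Longrightarrow> sub s t \<Longrightarrow> typing \<Gamma> M t"
| t_rec_emp: "typing \<Gamma> (Rec R) REmp"
| t_rec_fld: "(l, N) \<in> set R \<Longrightarrow> typing \<Gamma> N s \<Longrightarrow> typing \<Gamma> (Rec R) (Fld l s)"
| t_sel: "typing \<Gamma> M (Fld l s) \<Longrightarrow> typing \<Gamma> (Sel M l) s"
| t_merge: "typing \<Gamma> M r1 \<Longrightarrow> typing \<Gamma> (Rec R) r2 \<Longrightarrow> lblR R = lblT r2 \<Longrightarrow>
     isR r1 \<Longrightarrow> isR r2 \<Longrightarrow> typing \<Gamma> (Merge M R) (Plus r1 r2)"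

text \<open>Unary constructors: \<open>RecC\<close> = <<.>>, \<open>LabC l\<close> = l(.).\<close>
datatype con = RecC | LabC label

datatype ctyp =
    CAtom atom
  | CVar tvar
  | COmega
  | CArr ctyp ctyp
  | CInter ctyp ctyp
  | CCon con ctyp

fun con_ok :: "label set \<Rightarrow> con \<Rightarrow> bool" where
  "con_ok L RecC = True"
| "con_ok L (LabC l) = (l \<in> L)"

fun isTC :: "label set \<Rightarrow> ctyp \<Rightarrow> bool" where
  "isTC L (CArr s t) = (isTC L s \<and> isTC L t)"
| "isTC L (CInter s t) = (isTC L s \<and> isTC L t)"
| "isTC L (CCon c t) = (con_ok L c \<and> isTC L t)"
| "isTC L _ = True"

inductive csub :: "label set \<Rightarrow> ctyp \<Rightarrow> ctyp \<Rightarrow> bool" for L where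
  crefl: "isTC L s \<Longrightarrow> csub L s s"
| ctrans: "csub L s t \<Longrightarrow> csub L t u \<Longrightarrow> csub L s u"
| comega: "isTC L s \<Longrightarrow> csub L s COmega"
| comega_arr: "csub L COmega (CArr COmega COmega)"
| cinter_l: "isTC L s \<Longrightarrow> isTC L t \<Longrightarrow> csub L (CInter s t) s"
| cinter_r: "isTC L s \<Longrightarrow> isTC L t \<Longrightarrow> csub L (CInter s t) t"
| cinter_glb: "csub L s t1 \<Longrightarrow> csub L s t2 \<Longrightarrow> csub L s (CInter t1 t2)"
| carr_inter: "isTC L s \<Longrightarrow> isTC L t1 \<Longrightarrow> isTC L t2 \<Longrightarrow>
     csub L (CInter (CArr s t1) (CArr s t2)) (CArr s (CInter t1 t2))"
| carr: "csub L s2 s1 \<Longrightarrow> csub L t1 t2 \<Longrightarrow> csub L (CArr s1 t1) (CArr s2 t2)"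
| ccon_mono: "con_ok L c \<Longrightarrow> csub L t1 t2 \<Longrightarrow> csub L (CCon c t1) (CCon c t2)"
| ccon_inter: "con_ok L c \<Longrightarrow> isTC L t1 \<Longrightarrow> isTC L t2 \<Longrightarrow>
     csub L (CInter (CCon c t1) (CCon c t2)) (CCon c (CInter t1 t2))"

definition ceq :: "label set \<Rightarrow> ctyp \<Rightarrow> ctyp \<Rightarrow> bool" where
  "ceq L s t \<longleftrightarrow> csub L s t \<and> csub L t s"

fun csubst :: "(tvar \<Rightarrow> ctyp) \<Rightarrow> ctyp \<Rightarrow> ctyp" where
  "csubst S (CVar v) = S v"
| "csubst S (CArr s t) = CArr (csubst S s) (csubst S t)"
| "csubst S (CInter s t) = CInter (csubst S s) (csubst S t)"
| "csubst S (CCon c t) = CCon c (csubst S t)"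
| "csubst S t = t"

fun tr :: "label set \<Rightarrow> ty \<Rightarrow> ctyp option" where
  "tr L Omega = Some COmega"
| "tr L (Atom a) = Some (CAtom a)"
| "tr L (Arr s t) = (case (tr L s, tr L t) of
      (Some s', Some t') \<Rightarrow> Some (CArr s' t') | _ \<Rightarrow> None)"
| "tr L (Inter s t) = (case (tr L s, tr L t) of
      (Some s', Some t') \<Rightarrow> Some (CInter s' t') | _ \<Rightarrow> None)"
| "tr L (Fld l t) = (if l \<in> L then
      (case tr L t of Some t' \<Rightarrow> Some (CCon RecC (CCon (LabC l) t')) | None \<Rightarrow> None)
      else None)"
| "tr L REmp = Some (CCon RecC COmega)"
| "tr L (Plus r1 r2) = None"

text \<open>Given the translations \<open>ts, tr1, tr2\<close> of \<open>\<sigma>, \<rho>\<^sub>1, \<rho>\<^sub>2\<close> and the type variables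
  \<open>\<alpha> l\<close>, the finite intersection over \<open>L - lbl R\<close> is taken in increasing label order.\<close>
definition tauM :: "label set \<Rightarrow> label set \<Rightarrow> (label \<Rightarrow> tvar) \<Rightarrow> ctyp \<Rightarrow> ctyp \<Rightarrow> ctyp \<Rightarrow> ctyp" where
  "tauM L lR \<alpha> ts tr1 tr2 =
     foldl (\<lambda>acc l. CInter acc
              (CArr (CArr ts (CCon RecC (CCon (LabC l) (CVar (\<alpha> l)))))
                    (CArr ts (CCon RecC (CCon (LabC l) (CVar (\<alpha> l)))))))
           (CArr (CArr ts tr1) (CArr ts tr2))
           (sorted_list_of_set (L - lR))"

end

theory Submission
  imports Defs
begin

fun g :: "ctyp \<Rightarrow> ty" and gR :: "ctyp \<Rightarrow> ty" where
  "g (CAtom a) = Atom a"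
| "g (CVar v) = Omega"
| "g COmega = Omega"
| "g (CArr s t) = Arr (g s) (g t)"
| "g (CInter s t) = Inter (g s) (g t)"
| "g (CCon RecC t) = gR t"
| "g (CCon (LabC l) t) = Omega"
| "gR (CCon (LabC l) t) = Fld l (g t)"
| "gR (CInter s t) = Inter (gR s) (gR t)"
| "gR (CAtom a) = REmp"
| "gR (CVar v) = REmp"
| "gR COmega = REmp"
| "gR (CArr s t) = REmp"
| "gR (CCon RecC t) = REmp"

lemma g_ok: "isT (g u) \<and> isT (gR u) \<and> rshape (gR u)"
proof (induction u)
  case (CCon c t) then show ?case by (cases c) auto
qed auto

lemma gR_emp: "sub (gR u) REmp"
proof (induction u)
  case (CCon c t) then show ?case
    using g_ok by (cases c) (auto intro: sub.fld_emp sub.refl)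
next
  case (CInter s t) then show ?case
    using g_ok by (auto intro: sub.trans[OF sub.inter_l])
qed (auto intro: sub.intros)

lemma g_mono: "csub L u v \<Longrightarrow> sub (g u) (g v) \<and> sub (gR u) (gR v)"
proof (induction rule: csub.induct)
  case (crefl s) then show ?case using g_ok by (auto intro: sub.refl)
next
  case (ctrans s t u) then show ?case by (auto intro: sub.trans)
next
  case (comega s) then show ?case using g_ok gR_emp by (auto intro: sub.omega)
next
  case comega_arr then show ?case by (auto intro: sub.intros)
next
  case (cinter_l s t) then show ?case using g_ok by (auto intro: sub.intros)
next
  case (cinter_r s t) then show ?case using g_ok by (auto intro: sub.intros)
next
  case (cinter_glb s t1 t2) then show ?case by (auto intro: sub.intros)
next
  case (carr_inter s t1 t2) then show ?case using g_ok
    by (auto intro: sub.intros sub.trans[OF sub.inter_l])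
next
  case (carr s2 s1 t1 t2) then show ?case by (auto intro: sub.intros)
next
  case (ccon_mono c t1 t2) then show ?case
    by (cases c) (auto intro: sub.intros)
next
  case (ccon_inter c t1 t2) then show ?case using g_ok
    by (cases c) (auto intro: sub.intros sub.trans[OF sub.inter_l])
qed

lemma tr_g: "tr L \<tau> = Some t \<Longrightarrow> isT \<tau> \<Longrightarrow> sub (g t) \<tau> \<and> sub \<tau> (g t) \<and> csubst S t = t"
proof (induction \<tau> arbitrary: t)
  case (Arr s u) then show ?case by (auto split: option.splits intro: sub.intros)
next
  case (Inter s u)
  then obtain x y where xy: "tr L s = Some x" "tr L u = Some y" "t = CInter x y"
    by (auto split: option.splits)
  with Inter have h: "sub (g x) s" "sub s (g x)" "sub (g y) u" "sub u (g y)"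
     "csubst S x = x" "csubst S y = y" by auto
  have "sub (Inter (g x) (g y)) s" using h g_ok by (meson sub.inter_l sub.trans)
  moreover have "sub (Inter (g x) (g y)) u" using h g_ok by (meson sub.inter_r sub.trans)
  moreover have "sub (Inter s u) (g x)" using h Inter.prems by (meson isT.simps sub.inter_l sub.trans)
  moreover have "sub (Inter s u) (g y)" using h Inter.prems by (meson isT.simps sub.inter_r sub.trans)
  ultimately show ?case using xy h by (auto intro: sub.inter_glb)
next
  case (Fld l s) then show ?case by (auto split: option.splits if_splits intro: sub.intros)
qed (auto intro: sub.intros)

lemma rec_emp: "rshape r \<Longrightarrow> isT r \<Longrightarrow> plus_free r \<Longrightarrow> sub r REmp"
  by (induction r) (auto intro: sub.intros sub.trans[OF sub.inter_l])

definition rt :: "label list \<Rightarrow> ty" where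
  "rt ls = foldr (\<lambda>l r. Inter (Fld l Omega) r) ls REmp"

lemma rt_props: "isR (rt ls) \<and> lblT (rt ls) = set ls"
  by (induction ls) (auto simp: rt_def isR_def)

lemma rt_typ: "set ls \<subseteq> set (map fst R) \<Longrightarrow> typing \<Gamma> (Rec R) (rt ls)"
proof (induction ls)
  case Nil then show ?case by (simp add: rt_def typing.t_rec_emp)
next
  case (Cons l ls)
  then obtain N where "(l, N) \<in> set R" by auto
  then have "typing \<Gamma> (Rec R) (Fld l Omega)" by (rule typing.t_rec_fld) (rule typing.t_omega)
  with Cons show ?case by (auto simp: rt_def intro: typing.t_inter)
qed

lemma rt_plus: "l \<notin> set ls \<Longrightarrow> isT x \<Longrightarrow> sub (Plus (Fld l x) (rt ls)) (Fld l x)"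
proof (induction ls)
  case Nil then show ?case by (simp add: rt_def isR_def sub.plus_emp_r1)
next
  case (Cons l' ls)
  have r: "isR (rt ls)" using rt_props by blast
  have "sub (Plus (Fld l x) (rt (l' # ls))) (Inter (Fld l' Omega) (Plus (Fld l x) (rt ls)))"
    using Cons.prems r by (auto simp: rt_def intro: sub.plus_ext1)
  moreover have "sub (Inter (Fld l' Omega) (Plus (Fld l x) (rt ls))) (Plus (Fld l x) (rt ls))"
    using Cons.prems r by (intro sub.inter_r) (auto simp: isR_def)
  moreover have "sub (Plus (Fld l x) (rt ls)) (Fld l x)" using Cons by simp
  ultimately show ?case by (meson sub.trans)
qed

lemma Y_typ: "isT X \<Longrightarrow> typing \<Gamma> Ycomb (Arr (Arr Omega X) X)"
  unfolding Ycomb_def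
  apply (rule typing.t_abs, simp)
  apply (rule typing.t_app[where s=Omega])
   apply (rule typing.t_abs, simp)
   apply (rule typing.t_app[where s=Omega])
    apply (rule typing.t_var, simp)
   apply (rule typing.t_omega)
  apply (rule typing.t_omega)
  done

lemma comp_typ:
  assumes vars: "distinct [a, m, s]" and l: "l \<notin> lblR R" and T: "isT sg" "isT x"
  shows "typing \<Gamma> (mixin a m s R) (Arr (Arr sg (Fld l x)) (Arr sg (Fld l x)))"
proof -
  let ?A = "Arr sg (Fld l x)"
  let ?G = "\<Gamma>(a \<mapsto> ?A, m \<mapsto> Omega, s \<mapsto> sg)"
  have "typing ?G (App (Var a) (Var s)) (Fld l x)"
    using vars by (auto intro!: typing.t_app[where s=sg] typing.t_var)
  moreover have "typing ?G (Rec R) (rt (map fst R))" by (rule rt_typ) auto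
  ultimately have "typing ?G (Merge (App (Var a) (Var s)) R) (Plus (Fld l x) (rt (map fst R)))"
    using rt_props T by (intro typing.t_merge) (auto simp: lblR_def isR_def)
  moreover have "sub (Plus (Fld l x) (rt (map fst R))) (Fld l x)"
    using l T by (intro rt_plus) (auto simp: lblR_def)
  ultimately have "typing ?G (Merge (App (Var a) (Var s)) R) (Fld l x)" by (rule typing.t_sub)
  then have "typing (\<Gamma>(a \<mapsto> ?A)) (Lam m (Lam s (Merge (App (Var a) (Var s)) R))) (Arr Omega ?A)"
    using T by (auto intro!: typing.t_abs)
  moreover have "typing (\<Gamma>(a \<mapsto> ?A)) Ycomb (Arr (Arr Omega ?A) ?A)"
    using T by (intro Y_typ) auto
  ultimately show ?thesis unfolding mixin_def using T
    by (auto intro!: typing.t_abs intro: typing.t_app)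
qed

lemma fold_typ:
  assumes vars: "distinct [a, m, s]"
    and acc: "typing \<Gamma> (mixin a m s R) (g (csubst S acc))"
    and ls: "set ls \<inter> lblR R = {}"
  shows "typing \<Gamma> (mixin a m s R) (g (csubst S (foldl (\<lambda>acc l. CInter acc
              (CArr (CArr ts (CCon RecC (CCon (LabC l) (CVar (\<alpha> l)))))
                    (CArr ts (CCon RecC (CCon (LabC l) (CVar (\<alpha> l))))))) acc ls)))"
  using acc ls
proof (induction ls arbitrary: acc)
  case Nil then show ?case by simp
next
  case (Cons l ls)
  have "typing \<Gamma> (mixin a m s R) (Arr (Arr (g (csubst S ts)) (Fld l (g (S (\<alpha> l)))))
          (Arr (g (csubst S ts)) (Fld l (g (S (\<alpha> l))))))"
    using Cons.prems g_ok vars by (intro comp_typ) auto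
  with Cons.prems have "typing \<Gamma> (mixin a m s R) (g (csubst S (CInter acc
              (CArr (CArr ts (CCon RecC (CCon (LabC l) (CVar (\<alpha> l)))))
                    (CArr ts (CCon RecC (CCon (LabC l) (CVar (\<alpha> l)))))))))"
    by (auto intro: typing.t_inter)
  then show ?case using Cons.IH Cons.prems by simp
qed

theorem lemma5p2:
  fixes L :: "label set" and a m s :: var and R :: "(label \<times> trm) list"
    and \<sigma> \<rho>1 \<rho>2 :: ty and ts tr1 tr2 :: ctyp and \<alpha> :: "label \<Rightarrow> tvar"
  assumes finL: "finite L"
    and vars: "distinct [a, m, s]"
    and closed: "fv (mixin a m s R) = {}"
    and wfM: "wf_trm (mixin a m s R)"
    and \<sigma>T: "isT \<sigma>" and \<rho>1R: "isR \<rho>1" and \<rho>2R: "isR \<rho>2"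
    and pf: "plus_free \<sigma>" "plus_free \<rho>1" "plus_free \<rho>2"
    and tr_\<sigma>: "tr L \<sigma> = Some ts" and tr_\<rho>1: "tr L \<rho>1 = Some tr1" and tr_\<rho>2: "tr L \<rho>2 = Some tr2"
    and lbl: "lblT \<rho>2 = lblR R"
    and typed: "\<forall>\<rho>. isR \<rho> \<longrightarrow>
        typing Map.empty (mixin a m s R)
          (Arr (Arr \<sigma> (Inter \<rho> \<rho>1)) (Arr \<sigma> (Plus \<rho> \<rho>2)))"
    and \<alpha>_distinct: "inj_on \<alpha> (L - lblR R)"
  shows "\<forall>S \<tau> t. (\<forall>v. isTC L (S v)) \<longrightarrow> isT \<tau> \<longrightarrow> tr L \<tau> = Some t \<longrightarrow>
           ceq L t (csubst S (tauM L (lblR R) \<alpha> ts tr1 tr2)) \<longrightarrow>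
           typing Map.empty (mixin a m s R) \<tau>"
proof (intro allI impI)
  fix S \<tau> t
  assume \<tau>T: "isT \<tau>" and tr\<tau>: "tr L \<tau> = Some t"
    and eq: "ceq L t (csubst S (tauM L (lblR R) \<alpha> ts tr1 tr2))"
  have s1: "sub (g ts) \<sigma>" "sub \<sigma> (g ts)" "csubst S ts = ts"
    using tr_g[OF tr_\<sigma> \<sigma>T] by auto
  have s2: "sub (g tr1) \<rho>1" "sub \<rho>1 (g tr1)" "csubst S tr1 = tr1"
    using tr_g[OF tr_\<rho>1] \<rho>1R by (auto simp: isR_def)
  have s3: "sub (g tr2) \<rho>2" "sub \<rho>2 (g tr2)" "csubst S tr2 = tr2"
    using tr_g[OF tr_\<rho>2] \<rho>2R by (auto simp: isR_def)
  have r1e: "sub \<rho>1 REmp" using rec_emp \<rho>1R pf by (auto simp: isR_def)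
  have t0: "typing Map.empty (mixin a m s R)
          (Arr (Arr \<sigma> (Inter REmp \<rho>1)) (Arr \<sigma> (Plus REmp \<rho>2)))"
    using typed by (auto simp: isR_def)
  have "sub (Arr (Arr \<sigma> (Inter REmp \<rho>1)) (Arr \<sigma> (Plus REmp \<rho>2)))
            (Arr (Arr (g ts) (g tr1)) (Arr (g ts) (g tr2)))"
  proof (rule sub.arr)
    show "sub (Arr (g ts) (g tr1)) (Arr \<sigma> (Inter REmp \<rho>1))"
      using s1 s2 r1e by (auto intro!: sub.arr sub.inter_glb intro: sub.trans)
    show "sub (Arr \<sigma> (Plus REmp \<rho>2)) (Arr (g ts) (g tr2))"
      using s1 s3 \<rho>2R by (auto intro!: sub.arr intro: sub.trans[OF sub.plus_emp_l1])
  qed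
  with t0 have first: "typing Map.empty (mixin a m s R) (g (csubst S (CArr (CArr ts tr1) (CArr ts tr2))))"
    using s1 s2 s3 by (auto intro: typing.t_sub)
  have fin: "finite (L - lblR R)" using finL by simp
  have "typing Map.empty (mixin a m s R) (g (csubst S (tauM L (lblR R) \<alpha> ts tr1 tr2)))"
    unfolding tauM_def
    by (rule fold_typ[OF vars first]) (simp add: fin, blast)
  moreover have "sub (g (csubst S (tauM L (lblR R) \<alpha> ts tr1 tr2))) (g t)"
    using eq g_mono unfolding ceq_def by blast
  moreover have "sub (g t) \<tau>" using tr_g[OF tr\<tau> \<tau>T] by blast
  ultimately show "typing Map.empty (mixin a m s R) \<tau>" by (meson typing.t_sub)
qed

end
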